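(* Let $f=\frac1n\sum_{z=1}^nf_z$ be twice differentiable, let $x_0\in\mathbb{R}^d$, $H=\nabla^2f(x_0)$, and suppose $\lambda_{\min}(H)=-\lambda<0$ with unit eigenvector $v$, and that the CNC condition holds at $x_0$: $\mathbb{E}_z[(v^T\nabla f_z(x_0))^2]\ge\tau$ for $z$ uniform on $[n]$. Let $x_1=x_0-r\nabla f_z(x_0)$ with $z$ uniform on $[n]$, let $\eta>0$, $\kappa=1+\eta\lambda$, and $u_t=(I-\eta H)^t(x_1-x_0)$. Then for every $t\ge0$, $$\mathbb{E}[\|u_t\|^2]\ge\tau r^2\kappa^{2t}.$$ *)

theory Defs
  imports "HOL-Analysis.Analysis"
begin

definition is_eigenvalue :: "real^'d^'d \<Rightarrow> real \<Rightarrow> bool" where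
  "is_eigenvalue A \<mu> \<longleftrightarrow> (\<exists>w. w \<noteq> 0 \<and> A *v w = \<mu> *\<^sub>R w)"

definition lambda_min_is :: "real^'d^'d \<Rightarrow> real \<Rightarrow> bool" where
  "lambda_min_is A m \<longleftrightarrow> is_eigenvalue A m \<and> (\<forall>\<mu>. is_eigenvalue A \<mu> \<longrightarrow> m \<le> \<mu>)"

fun matpow :: "real^'d^'d \<Rightarrow> nat \<Rightarrow> real^'d^'d" where
  "matpow A 0 = mat 1"
| "matpow A (Suc k) = A ** matpow A k"

end

theory Submission
  imports Defs
begin



lemma delta_est:
  fixes F :: "'a::euclidean_space \<Rightarrow> real"
  assumes dF: "\<And>x. (F has_derivative (\<lambda>h. h \<bullet> g x)) (at x)"
    and lin: "linear G"
    and bd: "\<And>y. norm y < d \<Longrightarrow> norm (g (x0 + y) - g x0 - G y) \<le> e * norm y"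
    and e: "e > 0" and s: "s > 0" and sd: "s * (norm h + norm k) < d"
  shows "\<bar>F (x0 + s *\<^sub>R h + s *\<^sub>R k) - F (x0 + s *\<^sub>R h) - F (x0 + s *\<^sub>R k) + F x0
          - s^2 * (h \<bullet> G k)\<bar> \<le> e * s^2 * (2 * (norm h + norm k)^2)"
proof -
  define \<phi> where "\<phi> \<theta> = F (x0 + \<theta> *\<^sub>R (s *\<^sub>R h) + s *\<^sub>R k) - F (x0 + \<theta> *\<^sub>R (s *\<^sub>R h))" for \<theta> :: real
  define \<phi>' where "\<phi>' \<theta> = (s *\<^sub>R h) \<bullet> (g (x0 + \<theta> *\<^sub>R (s *\<^sub>R h) + s *\<^sub>R k) - g (x0 + \<theta> *\<^sub>R (s *\<^sub>R h)))" for \<theta> :: real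
  have der: "(\<phi> has_real_derivative \<phi>' \<theta>) (at \<theta>)" for \<theta>
  proof -
    have a1: "((\<lambda>\<theta>. x0 + \<theta> *\<^sub>R (s *\<^sub>R h) + s *\<^sub>R k) has_derivative (\<lambda>d. d *\<^sub>R (s *\<^sub>R h))) (at \<theta>)"
      by (auto intro!: derivative_eq_intros)
    have a2: "((\<lambda>\<theta>. x0 + \<theta> *\<^sub>R (s *\<^sub>R h)) has_derivative (\<lambda>d. d *\<^sub>R (s *\<^sub>R h))) (at \<theta>)"
      by (auto intro!: derivative_eq_intros)
    note b1 = has_derivative_compose[OF a1 dF]
    note b2 = has_derivative_compose[OF a2 dF]
    have "(\<phi> has_derivative (\<lambda>d. d *\<^sub>R (s *\<^sub>R h) \<bullet> g (x0 + \<theta> *\<^sub>R (s *\<^sub>R h) + s *\<^sub>R k) - d *\<^sub>R (s *\<^sub>R h) \<bullet> g (x0 + \<theta> *\<^sub>R (s *\<^sub>R h)))) (at \<theta>)"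
      unfolding \<phi>_def using has_derivative_diff[OF b1 b2] by (simp add: o_def)
    moreover have "(\<lambda>d. d *\<^sub>R (s *\<^sub>R h) \<bullet> g (x0 + \<theta> *\<^sub>R (s *\<^sub>R h) + s *\<^sub>R k) - d *\<^sub>R (s *\<^sub>R h) \<bullet> g (x0 + \<theta> *\<^sub>R (s *\<^sub>R h))) = (\<lambda>d. \<phi>' \<theta> * d)"
      unfolding \<phi>'_def by (auto simp: inner_diff_right algebra_simps)
    ultimately show ?thesis by (simp add: has_field_derivative_def)
  qed
  obtain \<theta> where th: "0 < \<theta>" "\<theta> < 1" and eq: "\<phi> 1 - \<phi> 0 = (1 - 0) * \<phi>' \<theta>"
    using MVT2[of 0 1 \<phi> \<phi>'] der by auto
  have LHS: "F (x0 + s *\<^sub>R h + s *\<^sub>R k) - F (x0 + s *\<^sub>R h) - F (x0 + s *\<^sub>R k) + F x0 = \<phi>' \<theta>"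
    using eq unfolding \<phi>_def by simp
  define a where "a = \<theta> *\<^sub>R (s *\<^sub>R h)"
  define b where "b = s *\<^sub>R k"
  define A where "A y = g (x0 + y) - g x0 - G y" for y
  have na: "norm a \<le> s * norm h" using th s unfolding a_def by (simp add: mult_left_le_one_le)
  have nb: "norm b = s * norm k" using s unfolding b_def by simp
  have nab: "norm (a + b) \<le> s * norm h + s * norm k" using na nb norm_triangle_ineq[of a b] by linarith
  have A1: "norm (A (a + b)) \<le> e * (s * norm h + s * norm k)"
  proof -
    have "norm (a + b) < d" using nab sd by (simp add: algebra_simps)
    then have "norm (A (a+b)) \<le> e * norm (a + b)" unfolding A_def by (rule bd)
    also have "\<dots> \<le> e * (s * norm h + s * norm k)" using nab e by simp
    finally show ?thesis .
  qed
  have A2: "norm (A a) \<le> e * (s * norm h + s * norm k)"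
  proof -
    have "norm a < d" using na sd s by (smt (verit) mult_nonneg_nonneg norm_ge_zero distrib_left)
    then have "norm (A a) \<le> e * norm a" unfolding A_def by (rule bd)
    also have "\<dots> \<le> e * (s * norm h + s * norm k)" using na e s
      by (smt (verit) mult_left_mono mult_nonneg_nonneg norm_ge_zero)
    finally show ?thesis .
  qed
  have gd: "g (x0 + a + b) - g (x0 + a) = G b + (A (a + b) - A a)"
    unfolding A_def using linear_add[OF lin, of a b] by (simp add: algebra_simps)
  have "\<phi>' \<theta> = (s *\<^sub>R h) \<bullet> (G b + (A (a + b) - A a))"
    unfolding \<phi>'_def using gd by (simp add: a_def b_def)
  also have "\<dots> = s^2 * (h \<bullet> G k) + (s *\<^sub>R h) \<bullet> (A (a + b) - A a)"
    unfolding b_def using linear_scale[OF lin] by (simp add: inner_add_right power2_eq_square)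
  finally have ph: "\<phi>' \<theta> - s^2 * (h \<bullet> G k) = (s *\<^sub>R h) \<bullet> (A (a + b) - A a)" by simp
  have "\<bar>(s *\<^sub>R h) \<bullet> (A (a + b) - A a)\<bar> \<le> norm (s *\<^sub>R h) * norm (A (a + b) - A a)"
    by (rule Cauchy_Schwarz_ineq2)
  also have "\<dots> \<le> (s * norm h) * (2 * (e * (s * norm h + s * norm k)))"
  proof -
    have "norm (A (a + b) - A a) \<le> 2 * (e * (s * norm h + s * norm k))"
      using A1 A2 norm_triangle_ineq4[of "A (a+b)" "A a"] by linarith
    then show ?thesis using s by (simp add: mult_left_mono)
  qed
  also have "\<dots> \<le> e * s^2 * (2 * (norm h + norm k)^2)"
  proof -
    have "(s * norm h) * (2 * (e * (s * norm h + s * norm k))) = e * s^2 * (2 * (norm h * (norm h + norm k)))"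
      by (simp add: algebra_simps power2_eq_square)
    also have "\<dots> \<le> e * s^2 * (2 * (norm h + norm k)^2)"
      using e s by (intro mult_left_mono) (auto simp: power2_eq_square intro!: mult_right_mono)
    finally show ?thesis .
  qed
  finally show ?thesis using LHS ph by simp
qed

lemma hess_sym:
  fixes F :: "'a::euclidean_space \<Rightarrow> real"
  assumes dF: "\<And>x. (F has_derivative (\<lambda>h. h \<bullet> g x)) (at x)"
    and dg: "(g has_derivative G) (at x0)"
  shows "h \<bullet> G k = k \<bullet> G h"
proof (rule ccontr)
  assume ne: "h \<bullet> G k \<noteq> k \<bullet> G h"
  define C where "C = 2 * (norm h + norm k)^2"
  define D where "D = \<bar>h \<bullet> G k - k \<bullet> G h\<bar>"
  have Dpos: "D > 0" using ne unfolding D_def by simp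
  have Cnn: "C \<ge> 0" unfolding C_def by simp
  define e where "e = D / (4 * (C + 1))"
  have epos: "e > 0" using Dpos Cnn unfolding e_def by simp
  have lin: "linear G" using dg has_derivative_bounded_linear bounded_linear.linear by blast
  obtain d where d: "d > 0" and bd0: "\<forall>y. norm (y - x0) < d \<longrightarrow> norm (g y - g x0 - G (y - x0)) \<le> e * norm (y - x0)"
    using dg epos unfolding has_derivative_at_alt by blast
  have bd: "norm y < d \<Longrightarrow> norm (g (x0 + y) - g x0 - G y) \<le> e * norm y" for y
    using bd0[rule_format, of "x0 + y"] by simp
  define s where "s = d / (2 * (norm h + norm k + 1))"
  have spos: "s > 0" using d unfolding s_def by (simp add: add_nonneg_pos)
  have sd: "s * (norm h + norm k) < d"
  proof -
    have "s * (norm h + norm k) \<le> s * (norm h + norm k + 1)" using spos by simp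
    also have "\<dots> = d / 2"
    proof -
      have "norm h + norm k + 1 > 0" by (simp add: add_nonneg_pos)
      then show ?thesis unfolding s_def by (simp add: field_simps)
    qed
    finally show ?thesis using d by simp
  qed
  have sd2: "s * (norm k + norm h) < d" using sd by (simp add: add.commute)
  note E1 = delta_est[OF dF lin bd epos spos sd]
  note E2 = delta_est[OF dF lin bd epos spos sd2]
  have C2: "2 * (norm k + norm h)^2 = C" unfolding C_def by (simp add: add.commute)
  let ?Q = "F (x0 + s *\<^sub>R h + s *\<^sub>R k) - F (x0 + s *\<^sub>R h) - F (x0 + s *\<^sub>R k) + F x0"
  have sw: "F (x0 + s *\<^sub>R k + s *\<^sub>R h) - F (x0 + s *\<^sub>R k) - F (x0 + s *\<^sub>R h) + F x0 = ?Q"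
    by (simp add: add.commute add.left_commute)
  have e1: "\<bar>?Q - s^2 * (h \<bullet> G k)\<bar> \<le> e * s^2 * C" using E1 unfolding C_def .
  have e2: "\<bar>?Q - s^2 * (k \<bullet> G h)\<bar> \<le> e * s^2 * C" using E2 sw C2 by simp
  have "s^2 * D \<le> 2 * (e * s^2 * C)"
  proof -
    have "s^2 * D = \<bar>(?Q - s^2 * (k \<bullet> G h)) - (?Q - s^2 * (h \<bullet> G k))\<bar>"
      unfolding D_def using spos by (simp add: abs_mult flip: right_diff_distrib)
    then show ?thesis using e1 e2 by linarith
  qed
  moreover have "2 * (e * s^2 * C) < s^2 * D"
  proof -
    have "2 * (e * s^2 * C) = s^2 * (D * (2 * C / (4 * (C + 1))))" unfolding e_def by (simp add: field_simps)
    also have "\<dots> < s^2 * (D * 1)"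
      using spos Dpos Cnn by (intro mult_strict_left_mono) (auto simp: field_simps)
    finally show ?thesis by simp
  qed
  ultimately show False by linarith
qed


theorem lemma30:
  fixes fs :: "nat \<Rightarrow> real^'d \<Rightarrow> real"
    and gs :: "nat \<Rightarrow> real^'d \<Rightarrow> real^'d"
    and gF :: "real^'d \<Rightarrow> real^'d"
    and H :: "real^'d^'d"
    and n :: nat and x0 v :: "real^'d"
    and lam \<tau> r \<eta> :: real and t :: nat
  assumes n_pos: "n \<ge> 1"
    and grad_fs: "\<And>z x. z < n \<Longrightarrow> GDERIV (fs z) x :> gs z x"
    and grad_F: "\<And>x. GDERIV (\<lambda>y. (1 / real n) * (\<Sum>z<n. fs z y)) x :> gF x"
    and twice_diff: "\<And>x. gF differentiable (at x)"
    and hess: "(gF has_derivative (\<lambda>h. H *v h)) (at x0)"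
    and lam_pos: "lam > 0"
    and lam_min: "lambda_min_is H (- lam)"
    and v_unit: "norm v = 1"
    and v_eig: "H *v v = (- lam) *\<^sub>R v"
    and CNC: "(1 / real n) * (\<Sum>z<n. (v \<bullet> gs z x0)^2) \<ge> \<tau>"
    and eta_pos: "\<eta> > 0"
  shows "(1 / real n) * (\<Sum>z<n.
            (norm (matpow (mat 1 - \<eta> *\<^sub>R H) t *v ((x0 - r *\<^sub>R gs z x0) - x0)))^2)
         \<ge> \<tau> * r^2 * (1 + \<eta> * lam) ^ (2 * t)"
  proof -
  define F where "F y = (1 / real n) * (\<Sum>z<n. fs z y)" for y
  have dF: "\<And>x. (F has_derivative (\<lambda>h. h \<bullet> gF x)) (at x)"
    using grad_F unfolding gderiv_def F_def[abs_def] by blast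
  have sym: "v \<bullet> (H *v e) = - lam * (v \<bullet> e)" for e
  proof -
    have "v \<bullet> (H *v e) = e \<bullet> (H *v v)"
      using hess_sym[OF dF hess, of v e] .
    also have "\<dots> = - lam * (v \<bullet> e)" using v_eig by (simp add: inner_commute)
    finally show ?thesis .
  qed
  define M where "M = mat 1 - \<eta> *\<^sub>R H"
  have Mv: "v \<bullet> (M *v u) = (1 + \<eta> * lam) * (v \<bullet> u)" for u
  proof -
    have "M *v u = u - \<eta> *\<^sub>R (H *v u)" unfolding M_def
      by (simp add: matrix_vector_mult_diff_rdistrib scaleR_matrix_vector_assoc)
    then have "v \<bullet> (M *v u) = v \<bullet> u - \<eta> * (v \<bullet> (H *v u))" by (simp add: inner_diff_right)
    then show ?thesis using sym[of u] by (simp add: algebra_simps)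
  qed
  have pw: "v \<bullet> (matpow M k *v w) = (1 + \<eta> * lam) ^ k * (v \<bullet> w)" for k w
  proof (induction k)
    case 0 then show ?case by simp
  next
    case (Suc k)
    have "matpow M (Suc k) *v w = M *v (matpow M k *v w)" by (simp add: matrix_vector_mul_assoc)
    then show ?case using Mv Suc by simp
  qed
  have each: "(norm (matpow M t *v ((x0 - r *\<^sub>R gs z x0) - x0)))^2
      \<ge> (1 + \<eta> * lam) ^ (2 * t) * r^2 * (v \<bullet> gs z x0)^2" for z
  proof -
    define u where "u = matpow M t *v ((x0 - r *\<^sub>R gs z x0) - x0)"
    have "v \<bullet> u = (1 + \<eta> * lam) ^ t * (- r * (v \<bullet> gs z x0))"
      unfolding u_def pw by simp
    then have "(v \<bullet> u)^2 = (1 + \<eta> * lam) ^ (2 * t) * r^2 * (v \<bullet> gs z x0)^2"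
      by (simp add: power_mult_distrib power_mult algebra_simps)
    moreover have "(v \<bullet> u)^2 \<le> (norm u)^2"
    proof -
      have "\<bar>v \<bullet> u\<bar> \<le> norm u" using Cauchy_Schwarz_ineq2[of v u] v_unit by simp
      then show ?thesis by (metis abs_ge_zero power2_abs power_mono)
    qed
    ultimately show ?thesis unfolding u_def by simp
  qed
  have "(1 / real n) * (\<Sum>z<n. (norm (matpow M t *v ((x0 - r *\<^sub>R gs z x0) - x0)))^2)
      \<ge> (1 / real n) * (\<Sum>z<n. (1 + \<eta> * lam) ^ (2 * t) * r^2 * (v \<bullet> gs z x0)^2)"
    by (intro mult_left_mono sum_mono each) simp
  also have "(1 / real n) * (\<Sum>z<n. (1 + \<eta> * lam) ^ (2 * t) * r^2 * (v \<bullet> gs z x0)^2)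
      = ((1 + \<eta> * lam) ^ (2 * t) * r^2) * ((1 / real n) * (\<Sum>z<n. (v \<bullet> gs z x0)^2))"
    by (simp add: sum_distrib_left algebra_simps)
  also have "\<dots> \<ge> ((1 + \<eta> * lam) ^ (2 * t) * r^2) * \<tau>"
    using CNC by (intro mult_left_mono) auto
  finally show ?thesis unfolding M_def by (simp add: algebra_simps)
qed

end
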